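(* Let $x,y\ge 2$ be coprime integers, $p\ge 1$ an integer, and $q=pxy-1$. Choose integers $i,j$ with $xj+yi=1$ and $0<i<x$ (so $j<0$). Let $G$ be the group generated by $a,b,t$ subject to the relations $a^x=b^y$ and $\mu^q\lambda^p=t^p$, where $\mu=b^ja^i$ and $\lambda=\mu^{-xy}a^x$. Then in every quotient $H$ of $G$ one has $t^p=a^{xp-i}b^{-j}$. Consequently, if $H$ is left-orderable, then (the images of) $t$, $a$ and $b$ all have the same sign with respect to any left order on $H$.
   Context: The group $G$ is the fundamental group of the complement of the $(p,q)$-cable of the $(x,y)$-torus knot; $\mu,\lambda$ are the meridian and longitude of the torus knot and $\mu,\lambda$ commute. A left order on a group $H$ is a strict total order with $ga<gb$ whenever $a<b$; its positive cone is $P=\{g: g>1\}$. Two elements have the same sign if both lie in $P$, both lie in $P^{-1}=\{g:g<1\}$, or both equal $1$. A left-orderable group is a nontrivial group admitting a left order. *)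

theory Defs
  imports "HOL-Algebra.Algebra"
begin

definition left_order :: "('a, 'b) monoid_scheme \<Rightarrow> ('a \<Rightarrow> 'a \<Rightarrow> bool) \<Rightarrow> bool" where
  "left_order H lt \<longleftrightarrow>
     (\<forall>u\<in>carrier H. \<not> lt u u) \<and>
     (\<forall>u\<in>carrier H. \<forall>v\<in>carrier H. \<forall>w\<in>carrier H. lt u v \<longrightarrow> lt v w \<longrightarrow> lt u w) \<and>
     (\<forall>u\<in>carrier H. \<forall>v\<in>carrier H. u = v \<or> lt u v \<or> lt v u) \<and>
     (\<forall>g\<in>carrier H. \<forall>u\<in>carrier H. \<forall>v\<in>carrier H. lt u v \<longrightarrow> lt (g \<otimes>\<^bsub>H\<^esub> u) (g \<otimes>\<^bsub>H\<^esub> v))"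

definition positive_cone :: "('a, 'b) monoid_scheme \<Rightarrow> ('a \<Rightarrow> 'a \<Rightarrow> bool) \<Rightarrow> 'a set" where
  "positive_cone H lt = {g \<in> carrier H. lt \<one>\<^bsub>H\<^esub> g}"

definition same_sign :: "('a, 'b) monoid_scheme \<Rightarrow> ('a \<Rightarrow> 'a \<Rightarrow> bool) \<Rightarrow> 'a \<Rightarrow> 'a \<Rightarrow> bool" where
  "same_sign H lt g h \<longleftrightarrow>
     (g \<in> positive_cone H lt \<and> h \<in> positive_cone H lt) \<or>
     (g \<in> (\<lambda>u. inv\<^bsub>H\<^esub> u) ` positive_cone H lt \<and> h \<in> (\<lambda>u. inv\<^bsub>H\<^esub> u) ` positive_cone H lt) \<or>
     (g = \<one>\<^bsub>H\<^esub> \<and> h = \<one>\<^bsub>H\<^esub>)"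

definition left_orderable :: "('a, 'b) monoid_scheme \<Rightarrow> bool" where
  "left_orderable H \<longleftrightarrow> group H \<and> carrier H \<noteq> {\<one>\<^bsub>H\<^esub>} \<and> (\<exists>lt. left_order H lt)"

end

theory Submission
  imports Defs
begin

lemma (in group) comm_int_pow:
  assumes "g \<otimes> h = h \<otimes> g" "g \<in> carrier G" "h \<in> carrier G"
  shows "g \<otimes> h [^] (k::int) = h [^] k \<otimes> g"
proof (cases "k \<ge> 0")
  case True
  have e: "h [^] k = h [^] (nat k)" using True int_pow_int[where x=h and n="nat k"] by simp
  have "h [^] (nat k) \<otimes> g = g \<otimes> h [^] (nat k)"
    using group_commutes_pow[of h g "nat k"] assms by (simp only:)
  then show ?thesis unfolding e by (rule sym)
next
  case False
  have "inv h \<otimes> g = inv h \<otimes> g \<otimes> (h \<otimes> inv h)" using assms(2,3) by simp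
  also have "\<dots> = inv h \<otimes> (g \<otimes> h) \<otimes> inv h" using assms(2,3) by (simp add: m_assoc)
  also have "\<dots> = inv h \<otimes> (h \<otimes> g) \<otimes> inv h" using assms by (simp only:)
  also have "\<dots> = (inv h \<otimes> h) \<otimes> g \<otimes> inv h" using assms(2,3) by (simp only: m_assoc inv_closed m_closed)
  also have "\<dots> = g \<otimes> inv h" using assms(2,3) by (simp only: l_inv l_one)
  finally have c: "inv h \<otimes> g = g \<otimes> inv h" .
  have "h [^] k = h [^] (- int (nat (-k)))" using False by simp
  also have "\<dots> = inv h [^] (nat (-k))" by (simp only: int_pow_neg_int[OF assms(3)] nat_pow_inv[OF assms(3)])
  finally have e: "h [^] k = inv h [^] (nat (-k))" .
  have "inv h [^] (nat (-k)) \<otimes> g = g \<otimes> inv h [^] (nat (-k))"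
    using group_commutes_pow[of "inv h" g "nat (-k)"] c assms by simp
  then show ?thesis unfolding e by (rule sym)
qed

definition sg :: "('a, 'b) monoid_scheme \<Rightarrow> ('a \<Rightarrow> 'a \<Rightarrow> bool) \<Rightarrow> 'a \<Rightarrow> int" where
  "sg H lt g = (if lt \<one>\<^bsub>H\<^esub> g then 1 else if lt g \<one>\<^bsub>H\<^esub> then -1 else 0)"

lemma lo_neg:
  fixes G (structure)
  assumes "group G" "left_order G lt" "g \<in> carrier G"
  shows "lt g \<one>\<^bsub>G\<^esub> \<longleftrightarrow> g \<in> (\<lambda>u. inv\<^bsub>G\<^esub> u) ` positive_cone G lt"
proof -
  interpret group G by fact
  have mono: "\<And>g u v. g \<in> carrier G \<Longrightarrow> u \<in> carrier G \<Longrightarrow> v \<in> carrier G \<Longrightarrow> lt u v \<Longrightarrow> lt (g \<otimes> u) (g \<otimes> v)"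
    using assms(2) unfolding left_order_def by blast
  show ?thesis
  proof
    assume "lt g \<one>"
    then have "lt (inv g \<otimes> g) (inv g \<otimes> \<one>)" by (intro mono) (use assms(3) in auto)
    then have "lt \<one> (inv g)" using assms(3) by simp
    then show "g \<in> (\<lambda>u. inv u) ` positive_cone G lt"
      unfolding positive_cone_def using assms(3)
      by (intro image_eqI[of _ _ "inv g"]) auto
  next
    assume "g \<in> (\<lambda>u. inv u) ` positive_cone G lt"
    then obtain u where u: "u \<in> carrier G" "lt \<one> u" "g = inv u"
      unfolding positive_cone_def by auto
    then have "lt (inv u \<otimes> \<one>) (inv u \<otimes> u)" by (intro mono) (use u in auto)
    then show "lt g \<one>" using u by simp
  qed
qed

lemma lo_basic:
  assumes "left_order G lt" "g \<in> carrier G" "one G \<in> carrier G"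
  shows "\<not> (lt \<one>\<^bsub>G\<^esub> g \<and> lt g \<one>\<^bsub>G\<^esub>)"
    and "\<not> lt \<one>\<^bsub>G\<^esub> g \<Longrightarrow> \<not> lt g \<one>\<^bsub>G\<^esub> \<Longrightarrow> g = \<one>\<^bsub>G\<^esub>"
  using assms unfolding left_order_def by blast+

lemma sg_char:
  assumes "left_order G lt" "g \<in> carrier G" "one G \<in> carrier G"
  shows "(sg G lt g = 1 \<longleftrightarrow> lt \<one>\<^bsub>G\<^esub> g) \<and> (sg G lt g = -1 \<longleftrightarrow> lt g \<one>\<^bsub>G\<^esub>)
     \<and> (sg G lt g = 0 \<longleftrightarrow> g = \<one>\<^bsub>G\<^esub>)"
proof -
  have irr: "\<not> lt (one G) (one G)" using assms(1,3) unfolding left_order_def by blast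
  have "\<not> (lt \<one>\<^bsub>G\<^esub> g \<and> lt g \<one>\<^bsub>G\<^esub>)"
    and "\<not> lt \<one>\<^bsub>G\<^esub> g \<Longrightarrow> \<not> lt g \<one>\<^bsub>G\<^esub> \<Longrightarrow> g = \<one>\<^bsub>G\<^esub>"
    using lo_basic[OF assms] by blast+
  then show ?thesis using irr unfolding sg_def by (cases "lt \<one>\<^bsub>G\<^esub> g"; cases "lt g \<one>\<^bsub>G\<^esub>") auto
qed

lemma sg_same_cases:
  assumes "left_order G lt" "g \<in> carrier G" "h \<in> carrier G" "one G \<in> carrier G"
    and "sg G lt g = sg G lt h"
  shows "(lt \<one>\<^bsub>G\<^esub> g \<and> lt \<one>\<^bsub>G\<^esub> h) \<or> (lt g \<one>\<^bsub>G\<^esub> \<and> lt h \<one>\<^bsub>G\<^esub>)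
     \<or> (g = \<one>\<^bsub>G\<^esub> \<and> h = \<one>\<^bsub>G\<^esub>)"
proof -
  note cg = sg_char[OF assms(1,2,4)] and ch = sg_char[OF assms(1,3,4)]
  note cg1 = cg[THEN conjunct1] and cg2 = cg[THEN conjunct2, THEN conjunct1]
    and cg3 = cg[THEN conjunct2, THEN conjunct2]
  note ch1 = ch[THEN conjunct1] and ch2 = ch[THEN conjunct2, THEN conjunct1]
    and ch3 = ch[THEN conjunct2, THEN conjunct2]
  have "sg G lt g = 1 \<or> sg G lt g = -1 \<or> sg G lt g = 0" unfolding sg_def by simp
  then show ?thesis
  proof (elim disjE)
    assume a: "sg G lt g = 1"
    then have "sg G lt h = 1" using assms(5) by simp
    then have "lt \<one>\<^bsub>G\<^esub> g" "lt \<one>\<^bsub>G\<^esub> h" using a cg1 ch1 by simp_all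
    then show ?thesis by (intro disjI1 conjI)
  next
    assume a: "sg G lt g = -1"
    then have "sg G lt h = -1" using assms(5) by simp
    then have "lt g \<one>\<^bsub>G\<^esub>" "lt h \<one>\<^bsub>G\<^esub>" using a cg2 ch2 by simp_all
    then show ?thesis by (intro disjI2 disjI1 conjI)
  next
    assume a: "sg G lt g = 0"
    then have "sg G lt h = 0" using assms(5) by simp
    then have "g = \<one>\<^bsub>G\<^esub>" "h = \<one>\<^bsub>G\<^esub>" using a cg3 ch3 by simp_all
    then show ?thesis by (intro disjI2 conjI)
  qed
qed

lemma same_sign_sg:
  fixes G (structure)
  assumes "group G" "left_order G lt" "g \<in> carrier G" "h \<in> carrier G"
    and "sg G lt g = sg G lt h"
  shows "same_sign G lt g h"
proof -
  interpret group G by fact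
  note n1 = lo_neg[OF assms(1,2,3)] and n2 = lo_neg[OF assms(1,2,4)]
  have one: "\<one> \<in> carrier G" by simp
  have "(lt \<one> g \<and> lt \<one> h) \<or> (lt g \<one> \<and> lt h \<one>) \<or> (g = \<one> \<and> h = \<one>)"
    using sg_same_cases[OF assms(2,3,4) one assms(5)] .
  then show ?thesis
  proof (elim disjE conjE)
    assume "lt \<one> g" "lt \<one> h"
    then have "g \<in> positive_cone G lt" "h \<in> positive_cone G lt"
      using assms(3,4) unfolding positive_cone_def by simp_all
    then show ?thesis unfolding same_sign_def by (intro disjI1 conjI)
  next
    assume "lt g \<one>" "lt h \<one>"
    then have "g \<in> (\<lambda>u. inv u) ` positive_cone G lt" "h \<in> (\<lambda>u. inv u) ` positive_cone G lt"
      using n1 n2 by simp_all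
    then show ?thesis unfolding same_sign_def by (intro disjI2 disjI1 conjI)
  next
    assume "g = \<one>" "h = \<one>"
    then show ?thesis unfolding same_sign_def by (intro disjI2 conjI)
  qed
qed

lemma sg_mult:
  fixes G (structure)
  assumes "group G" "left_order G lt" "g \<in> carrier G" "h \<in> carrier G"
    and "sg G lt g = sg G lt h"
  shows "sg G lt (g \<otimes>\<^bsub>G\<^esub> h) = sg G lt g"
proof -
  interpret group G by fact
  have mono: "\<And>g u v. g \<in> carrier G \<Longrightarrow> u \<in> carrier G \<Longrightarrow> v \<in> carrier G \<Longrightarrow> lt u v \<Longrightarrow> lt (g \<otimes> u) (g \<otimes> v)"
    and tr: "\<And>u v w. u \<in> carrier G \<Longrightarrow> v \<in> carrier G \<Longrightarrow> w \<in> carrier G \<Longrightarrow> lt u v \<Longrightarrow> lt v w \<Longrightarrow> lt u w"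
    using assms(2) unfolding left_order_def by blast+
  have one: "\<one> \<in> carrier G" by simp
  have gh: "g \<otimes> h \<in> carrier G" using assms by simp
  note cg = sg_char[OF assms(2,3) one] and cgh = sg_char[OF assms(2) gh one]
  have "(lt \<one> g \<and> lt \<one> h) \<or> (lt g \<one> \<and> lt h \<one>) \<or> (g = \<one> \<and> h = \<one>)"
    using sg_same_cases[OF assms(2,3,4) one assms(5)] .
  then show ?thesis
  proof (elim disjE conjE)
    assume 1: "lt \<one> g" "lt \<one> h"
    have "lt (g \<otimes> \<one>) (g \<otimes> h)" by (rule mono) (use 1 assms in auto)
    then have "lt g (g \<otimes> h)" using assms(3) by simp
    then have "lt \<one> (g \<otimes> h)" using tr[OF one assms(3) gh] 1 by blast
    then have "sg G lt (g \<otimes> h) = 1" "sg G lt g = 1" using cg cgh 1 by blast+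
    then show ?thesis by simp
  next
    assume 2: "lt g \<one>" "lt h \<one>"
    have "lt (g \<otimes> h) (g \<otimes> \<one>)" by (rule mono) (use 2 assms in auto)
    then have "lt (g \<otimes> h) g" using assms(3) by simp
    then have "lt (g \<otimes> h) \<one>" using tr[OF gh assms(3) one] 2 by blast
    then have "sg G lt (g \<otimes> h) = -1" "sg G lt g = -1" using cg cgh 2 by blast+
    then show ?thesis by simp
  next
    assume "g = \<one>" "h = \<one>"
    then show ?thesis by simp
  qed
qed

lemma sg_pow_nat:
  fixes G (structure)
  assumes "group G" "left_order G lt" "g \<in> carrier G"
  shows "sg G lt (g [^]\<^bsub>G\<^esub> Suc n) = sg G lt g"
proof (induction n)
  case 0
  interpret group G by fact
  show ?case using assms by simp
next
  case (Suc n)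
  interpret group G by fact
  have "g [^] Suc (Suc n) = g [^] Suc n \<otimes> g" by simp
  then show ?case using sg_mult[OF assms(1,2) _ assms(3), of "g [^] Suc n"] Suc assms by simp
qed

lemma sg_pow_int:
  fixes G (structure)
  assumes "group G" "left_order G lt" "g \<in> carrier G" "(k::int) > 0"
  shows "sg G lt (g [^]\<^bsub>G\<^esub> k) = sg G lt g"
proof -
  define n where "n = nat k - 1"
  have n: "k = int (Suc n)" using assms(4) unfolding n_def by simp
  show ?thesis unfolding n int_pow_int using sg_pow_nat[OF assms(1,2,3), of n] .
qed

theorem lemma3p1:
  fixes H (structure)
    and x y p q i j :: int
    and a b t :: 'a
  assumes "x \<ge> 2" and "y \<ge> 2" and "coprime x y"
    and "p \<ge> 1" and "q = p * x * y - 1"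
    and "x * j + y * i = 1" and "0 < i" and "i < x"
    and "group H"
    and "a \<in> carrier H" and "b \<in> carrier H" and "t \<in> carrier H"
    and "generate H {a, b, t} = carrier H"
    and "a [^] x = b [^] y"
    and "(b [^] j \<otimes> a [^] i) [^] q \<otimes>
           ((b [^] j \<otimes> a [^] i) [^] (- (x * y)) \<otimes> a [^] x) [^] p = t [^] p"
  shows "t [^] p = a [^] (x * p - i) \<otimes> b [^] (- j)
         \<and> (left_orderable H \<longrightarrow>
              (\<forall>lt. left_order H lt \<longrightarrow>
                 same_sign H lt t a \<and> same_sign H lt a b \<and> same_sign H lt t b))"
proof -
  interpret group H by fact
  note ab = assms(10,11)
  define \<mu> where "\<mu> = b [^] j \<otimes> a [^] i"
  define c where "c = a [^] x"
  have mc: "\<mu> \<in> carrier H" "c \<in> carrier H" using ab by (auto simp: \<mu>_def c_def)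
  have c1: "c \<otimes> a [^] i = a [^] i \<otimes> c"
    using ab by (simp add: c_def flip: int_pow_mult) (simp add: add.commute)
  have c2: "c \<otimes> b [^] j = b [^] j \<otimes> c"
    using ab by (simp add: c_def assms(14) flip: int_pow_mult) (simp add: add.commute)
  have c3: "\<mu> \<otimes> c = c \<otimes> \<mu>"
    unfolding \<mu>_def using ab c1 c2 mc
    by (metis c_def int_pow_closed m_assoc)
  have c4: "\<mu> [^] (- (x * y)) \<otimes> c = c \<otimes> \<mu> [^] (- (x * y))"
    using comm_int_pow[OF _ mc(2) mc(1), of "- (x*y)"] c3 by simp
  have lam: "(\<mu> [^] (- (x * y)) \<otimes> c) [^] p = \<mu> [^] (- (x * y) * p) \<otimes> c [^] p"
    using int_pow_mult_distrib[OF c4] mc by (simp add: int_pow_pow)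
  have "\<mu> [^] q \<otimes> \<mu> [^] (- (x * y) * p) = \<mu> [^] (-1::int)"
    using mc assms(5) by (simp flip: int_pow_mult)
  note pq = this
  have "t [^] p = \<mu> [^] q \<otimes> (\<mu> [^] (- (x * y) * p) \<otimes> c [^] p)"
    using assms(15)[folded \<mu>_def c_def] lam by simp
  also have "\<dots> = (\<mu> [^] q \<otimes> \<mu> [^] (- (x * y) * p)) \<otimes> c [^] p"
    using mc by (simp add: m_assoc)
  also have "\<dots> = inv \<mu> \<otimes> c [^] p"
    using pq mc by (simp add: int_pow_neg)
  finally have e1: "t [^] p = inv \<mu> \<otimes> c [^] p" .
  have inv\<mu>: "inv \<mu> = a [^] (-i) \<otimes> b [^] (-j)"
    using ab by (simp add: \<mu>_def inv_mult_group int_pow_neg)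
  have cp: "c [^] p = b [^] (y * p)" "c [^] p = a [^] (x * p)"
    subgoal using ab by (simp add: c_def assms(14) int_pow_pow)
    subgoal using ab by (simp add: c_def int_pow_pow)
    done
  have c5: "b [^] (-j) \<otimes> c [^] p = c [^] p \<otimes> b [^] (-j)"
    unfolding cp(1) using ab by (simp flip: int_pow_mult add: add.commute)
  have "t [^] p = a [^] (-i) \<otimes> (b [^] (-j) \<otimes> c [^] p)"
    using e1 inv\<mu> ab mc by (simp add: m_assoc)
  also have "\<dots> = (a [^] (-i) \<otimes> c [^] p) \<otimes> b [^] (-j)"
    unfolding c5 using ab mc by (simp add: m_assoc)
  also have "\<dots> = a [^] (x * p - i) \<otimes> b [^] (- j)"
    unfolding cp(2) using ab by (simp flip: int_pow_mult add: add.commute)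
  finally have part1: "t [^] p = a [^] (x * p - i) \<otimes> b [^] (- j)" .
  have "y * i \<ge> y" using assms(7) assms(2) by (simp add: mult_le_cancel_left1)
  then have "x * j < 0" using assms(6) assms(2) by linarith
  then have jneg: "j < 0" using assms(1) by (simp add: mult_less_0_iff)
  have xpi: "x * p - i > 0"
  proof -
    have "x * p \<ge> x" using assms(1,4) by (simp add: mult_le_cancel_left1)
    then show ?thesis using assms(8) by linarith
  qed
  have part2: "same_sign H lt t a \<and> same_sign H lt a b \<and> same_sign H lt t b"
    if lo: "left_order H lt" for lt
  proof -
    note G = assms(9)
    have sab: "sg H lt a = sg H lt b"
      using sg_pow_int[OF G lo ab(1), of x] sg_pow_int[OF G lo ab(2), of y] assms(1,2,14) by simp
    have s1: "sg H lt (a [^] (x * p - i)) = sg H lt a" using sg_pow_int[OF G lo ab(1) xpi] .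
    have s2: "sg H lt (b [^] (- j)) = sg H lt a" using sg_pow_int[OF G lo ab(2), of "-j"] jneg sab by simp
    have "sg H lt (t [^] p) = sg H lt a"
      using part1 sg_mult[OF G lo _ _, of "a [^] (x * p - i)" "b [^] (- j)"] s1 s2 ab by simp
    then have sta: "sg H lt t = sg H lt a" using sg_pow_int[OF G lo assms(12), of p] assms(4) by simp
    show ?thesis using same_sign_sg[OF G lo] sta sab ab assms(12) by simp
  qed
  show ?thesis using part1 part2 by blast
qed

end
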